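(* Let $k$ be an algebraically closed field of characteristic $0$. Let $G$ be a finite group acting on an irreducible affine algebraic variety $X$, and let $Z$ be an irreducible affine algebraic variety (endowed with an action of an algebraic torus $T$ having an open orbit). Let $\pi_{X,G}\colon X\to X/\!\!/G$ be the categorical quotient. Then for every two morphisms $\psi_1,\psi_2\colon Z\to X$ the following are equivalent: (i) $\pi_{X,G}\circ\psi_1=\pi_{X,G}\circ\psi_2$; (ii) there is $g\in G$ such that $\psi_2=g\cdot\psi_1$.
   Context: $X/\!\!/G$ is the affine variety with coordinate ring $k[X]^G$ and $\pi_{X,G}$ is the morphism induced by the inclusion $k[X]^G\subseteq k[X]$. For a morphism $\psi\colon Z\to X$ and $g\in G$, the morphism $g\cdot\psi$ is defined by $(g\cdot\psi)(z)=g\cdot(\psi(z))$. *)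

theory Defs
  imports "HOL-Algebra.Group_Action" "HOL-Computational_Algebra.Polynomial"
begin

definition alg_closed :: "'k::field itself \<Rightarrow> bool" where
  "alg_closed _ \<longleftrightarrow> (\<forall>p :: 'k poly. degree p > 0 \<longrightarrow> (\<exists>x. poly p x = 0))"

inductive_set poly_fun :: "(('v \<Rightarrow> 'k::comm_ring_1) \<Rightarrow> 'k) set" where
  pf_const: "(\<lambda>x. c) \<in> poly_fun"
| pf_var: "(\<lambda>x. x i) \<in> poly_fun"
| pf_add: "p \<in> poly_fun \<Longrightarrow> q \<in> poly_fun \<Longrightarrow> (\<lambda>x. p x + q x) \<in> poly_fun"
| pf_mult: "p \<in> poly_fun \<Longrightarrow> q \<in> poly_fun \<Longrightarrow> (\<lambda>x. p x * q x) \<in> poly_fun"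

definition zariski_closed :: "('v \<Rightarrow> 'k::comm_ring_1) set \<Rightarrow> bool" where
  "zariski_closed A \<longleftrightarrow> (\<exists>S \<subseteq> poly_fun. A = {x. \<forall>f\<in>S. f x = 0})"

definition affine_variety :: "('v \<Rightarrow> 'k::comm_ring_1) set \<Rightarrow> bool" where
  "affine_variety X \<longleftrightarrow> zariski_closed X \<and> X \<noteq> {}"

definition irreducible_variety :: "('v \<Rightarrow> 'k::comm_ring_1) set \<Rightarrow> bool" where
  "irreducible_variety X \<longleftrightarrow> affine_variety X \<and>
     (\<forall>A B. zariski_closed A \<longrightarrow> zariski_closed B \<longrightarrow> X \<subseteq> A \<union> B \<longrightarrow> X \<subseteq> A \<or> X \<subseteq> B)"

definition morphism :: "('w \<Rightarrow> 'k::comm_ring_1) set \<Rightarrow> ('v \<Rightarrow> 'k) set \<Rightarrow> (('w \<Rightarrow> 'k) \<Rightarrow> ('v \<Rightarrow> 'k)) \<Rightarrow> bool" where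
  "morphism Z X \<psi> \<longleftrightarrow> \<psi> ` Z \<subseteq> X \<and> (\<forall>i. \<exists>p\<in>poly_fun. \<forall>z\<in>Z. \<psi> z i = p z)"

text \<open>Algebraic torus T = (k^*)^r (coordinates indexed by 'r) and its regular action on Z:
  the action map T \<times> Z \<rightarrow> Z is given coordinatewise by polynomials in t, t^{-1} and z.\<close>
definition torus :: "('r \<Rightarrow> 'k::field) set" where
  "torus = {t. \<forall>i. t i \<noteq> 0}"

definition torus_coords :: "('r \<Rightarrow> 'k::field) \<Rightarrow> ('w \<Rightarrow> 'k) \<Rightarrow> (('r + 'r) + 'w \<Rightarrow> 'k)" where
  "torus_coords t z = (\<lambda>v. case v of Inl (Inl i) \<Rightarrow> t i | Inl (Inr i) \<Rightarrow> inverse (t i) | Inr j \<Rightarrow> z j)"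

definition torus_action :: "('w \<Rightarrow> 'k::field) set \<Rightarrow> (('r \<Rightarrow> 'k) \<Rightarrow> ('w \<Rightarrow> 'k) \<Rightarrow> ('w \<Rightarrow> 'k)) \<Rightarrow> bool" where
  "torus_action Z \<tau> \<longleftrightarrow>
     (\<forall>t\<in>torus. \<forall>z\<in>Z. \<tau> t z \<in> Z)
   \<and> (\<forall>z\<in>Z. \<tau> (\<lambda>i. 1) z = z)
   \<and> (\<forall>s\<in>torus. \<forall>t\<in>torus. \<forall>z\<in>Z. \<tau> (\<lambda>i. s i * t i) z = \<tau> s (\<tau> t z))
   \<and> (\<forall>j. \<exists>p\<in>poly_fun. \<forall>t\<in>torus. \<forall>z\<in>Z. \<tau> t z j = p (torus_coords t z))"

definition has_open_orbit :: "('w \<Rightarrow> 'k::field) set \<Rightarrow> (('r \<Rightarrow> 'k) \<Rightarrow> ('w \<Rightarrow> 'k) \<Rightarrow> ('w \<Rightarrow> 'k)) \<Rightarrow> bool" where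
  "has_open_orbit Z \<tau> \<longleftrightarrow>
     (\<exists>z0\<in>Z. \<exists>C. zariski_closed C \<and> {\<tau> t z0 | t. t \<in> torus} = Z - C)"

text \<open>G-invariant regular functions on X (represented by polynomials on the ambient space),
  i.e. elements of k[X]^G.\<close>
definition invariant_polys :: "('g, 'c) monoid_scheme \<Rightarrow> ('g \<Rightarrow> ('v \<Rightarrow> 'k) \<Rightarrow> ('v \<Rightarrow> 'k))
     \<Rightarrow> ('v \<Rightarrow> 'k::comm_ring_1) set \<Rightarrow> (('v \<Rightarrow> 'k) \<Rightarrow> 'k) set" where
  "invariant_polys G act X = {f \<in> poly_fun. \<forall>g\<in>carrier G. \<forall>x\<in>X. f (act g x) = f x}"

text \<open>The quotient morphism \<pi>_{X,G} : X \<rightarrow> X//G. A point of X//G = Spec k[X]^G is represented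
  by the corresponding k-algebra character of k[X]^G; \<pi>_{X,G}(x) is evaluation at x.\<close>
definition quot_map :: "('g, 'c) monoid_scheme \<Rightarrow> ('g \<Rightarrow> ('v \<Rightarrow> 'k) \<Rightarrow> ('v \<Rightarrow> 'k))
     \<Rightarrow> ('v \<Rightarrow> 'k::comm_ring_1) set \<Rightarrow> ('v \<Rightarrow> 'k) \<Rightarrow> ((('v \<Rightarrow> 'k) \<Rightarrow> 'k) \<Rightarrow> 'k)" where
  "quot_map G act X x = (\<lambda>f. if f \<in> invariant_polys G act X then f x else 0)"

end

theory Submission
  imports Defs
begin

lemma pf_subst:
  assumes "p \<in> poly_fun" and "\<And>i. q i \<in> poly_fun"
  shows "(\<lambda>w. p (\<lambda>i. q i w)) \<in> poly_fun"
  using assms(1)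
proof induction
  case (pf_const c) show ?case by (rule poly_fun.pf_const)
next
  case (pf_var i) show ?case using assms(2)[of i] by simp
next
  case (pf_add p q) then show ?case by (simp add: poly_fun.pf_add)
next
  case (pf_mult p q) then show ?case by (simp add: poly_fun.pf_mult)
qed

lemma pf_prod:
  assumes "\<forall>a\<in>A. f a \<in> poly_fun"
  shows "(\<lambda>x. \<Prod>a\<in>A. f a x) \<in> poly_fun"
proof (cases "finite A")
  case True
  then show ?thesis using assms
  proof (induction A rule: finite_induct)
    case empty then show ?case by (simp add: poly_fun.pf_const)
  next
    case (insert a A)
    then have "(\<lambda>x. f a x * (\<Prod>a\<in>A. f a x)) \<in> poly_fun"
      by (intro poly_fun.pf_mult) auto
    then show ?case using insert by simp
  qed
next
  case False then show ?thesis by (simp add: poly_fun.pf_const)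
qed

lemma pf_diff:
  assumes "p \<in> poly_fun" "q \<in> poly_fun"
  shows "(\<lambda>x. p x - q x) \<in> poly_fun"
proof -
  have "(\<lambda>x. (- 1) * q x) \<in> poly_fun"
    using assms by (intro poly_fun.pf_mult poly_fun.pf_const)
  then have "(\<lambda>x. p x + (- 1) * q x) \<in> poly_fun"
    using assms by (intro poly_fun.pf_add)
  then show ?thesis by simp
qed

lemma closed_empty: "zariski_closed ({} :: ('v \<Rightarrow> 'k::comm_ring_1) set)"
  unfolding zariski_closed_def
  by (rule exI[of _ "{\<lambda>x. 1}"]) (auto intro: poly_fun.pf_const)

lemma closed_Un:
  assumes "zariski_closed (A :: ('v \<Rightarrow> 'k::field) set)" "zariski_closed B"
  shows "zariski_closed (A \<union> B)"
proof -
  obtain S where S: "S \<subseteq> poly_fun" "A = {x. \<forall>f\<in>S. f x = 0}"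
    using assms(1) unfolding zariski_closed_def by blast
  obtain T where T: "T \<subseteq> poly_fun" "B = {x. \<forall>f\<in>T. f x = 0}"
    using assms(2) unfolding zariski_closed_def by blast
  let ?U = "{(\<lambda>x. f x * g x) | f g. f \<in> S \<and> g \<in> T}"
  have "?U \<subseteq> poly_fun" using S T by (auto intro: poly_fun.pf_mult)
  moreover have "A \<union> B = {x. \<forall>h\<in>?U. h x = 0}"
  proof
    show "A \<union> B \<subseteq> {x. \<forall>h\<in>?U. h x = 0}" using S T by auto
  next
    show "{x. \<forall>h\<in>?U. h x = 0} \<subseteq> A \<union> B"
    proof
      fix x assume x: "x \<in> {x. \<forall>h\<in>?U. h x = 0}"
      show "x \<in> A \<union> B"
      proof (rule ccontr)
        assume "x \<notin> A \<union> B"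
        then obtain f g where "f x \<noteq> 0" "g x \<noteq> 0" "f \<in> S" "g \<in> T" using S T by auto
        then have m: "(\<lambda>x. f x * g x) \<in> ?U" by blast
        from x have "\<forall>h\<in>?U. h x = 0" by (rule CollectD)
        then have "(\<lambda>x. f x * g x) x = 0" using m by (rule bspec)
        then have "f x * g x = 0" by simp
        then show False using \<open>f x \<noteq> 0\<close> \<open>g x \<noteq> 0\<close> by simp
      qed
    qed
  qed
  ultimately show ?thesis unfolding zariski_closed_def by blast
qed

lemma closed_UN:
  assumes "finite I" "\<forall>i\<in>I. zariski_closed (A i :: ('v \<Rightarrow> 'k::field) set)"
  shows "zariski_closed (\<Union>i\<in>I. A i)"
  using assms by (induction I rule: finite_induct) (auto simp: closed_empty intro: closed_Un)

lemma irred_cover: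
  assumes "irreducible_variety (Z :: ('v \<Rightarrow> 'k::field) set)" "finite I"
    "\<forall>i\<in>I. zariski_closed (A i)" "Z \<subseteq> (\<Union>i\<in>I. A i)"
  shows "\<exists>i\<in>I. Z \<subseteq> A i"
  using assms(2,3,4)
proof (induction I rule: finite_induct)
  case empty then show ?case using assms(1) unfolding irreducible_variety_def affine_variety_def by auto
next
  case (insert a I)
  have c: "zariski_closed (\<Union>i\<in>I. A i)" using insert by (intro closed_UN) auto
  have "Z \<subseteq> A a \<union> (\<Union>i\<in>I. A i)" using insert by auto
  then have "Z \<subseteq> A a \<or> Z \<subseteq> (\<Union>i\<in>I. A i)"
    using assms(1) c insert(4) unfolding irreducible_variety_def by blast
  then show ?case using insert by auto
qed

lemma separate:
  fixes G :: "('g, 'c) monoid_scheme"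
    and act :: "'g \<Rightarrow> ('n \<Rightarrow> 'k::field) \<Rightarrow> ('n \<Rightarrow> 'k)"
  assumes grp: "group G" and fin: "finite (carrier G)"
    and ga: "group_action G X act"
    and mor: "\<forall>g\<in>carrier G. morphism X X (act g)"
    and x: "x \<in> X" and y: "y \<in> X"
    and no: "\<forall>g\<in>carrier G. y \<noteq> act g x"
  shows "\<exists>F\<in>invariant_polys G act X. F x \<noteq> F y"
proof -
  interpret group G by (rule grp)
  interpret A: group_action G X act by (rule ga)
  have ne: "\<forall>g\<in>carrier G. act g y \<noteq> x"
  proof
    fix g assume g: "g \<in> carrier G"
    show "act g y \<noteq> x"
    proof
      assume "act g y = x"
      then have "act (inv\<^bsub>G\<^esub> g) x = y" using A.orbit_sym_aux[OF g y] by simp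
      then show False using no g by auto
    qed
  qed
  have "\<forall>g\<in>carrier G. \<exists>c. act g y c \<noteq> x c" using ne by (metis ext)
  then obtain c where c: "\<forall>g\<in>carrier G. act g y (c g) \<noteq> x (c g)" by metis
  have "\<forall>g\<in>carrier G. \<forall>i. \<exists>p\<in>poly_fun. \<forall>w\<in>X. act g w i = p w"
    using mor unfolding morphism_def by blast
  then obtain P where P: "\<forall>g\<in>carrier G. \<forall>i. P g i \<in> poly_fun \<and> (\<forall>w\<in>X. act g w i = P g i w)"
    by metis
  define u where "u g w = (w (c g) - x (c g)) * inverse (act g y (c g) - x (c g))" for g w
  define f where "f w = 1 - (\<Prod>g\<in>carrier G. (1 - u g w))" for w
  define F where "F w = (\<Prod>h\<in>carrier G. f (\<lambda>i. P h i w))" for w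
  have upf: "(\<lambda>w. 1 - u g w) \<in> poly_fun" for g
    unfolding u_def
    by (intro pf_diff poly_fun.pf_const poly_fun.pf_mult poly_fun.pf_var)
  have fpf: "f \<in> poly_fun"
  proof -
    have "(\<lambda>w. 1 - (\<Prod>g\<in>carrier G. (1 - u g w))) \<in> poly_fun"
      by (rule pf_diff[OF poly_fun.pf_const pf_prod]) (use upf in blast)
    then show ?thesis unfolding f_def[abs_def] .
  qed
  have Fpf: "F \<in> poly_fun"
  proof -
    have "(\<lambda>w. \<Prod>h\<in>carrier G. f (\<lambda>i. P h i w)) \<in> poly_fun"
    proof (rule pf_prod, rule ballI)
      fix h assume h: "h \<in> carrier G"
      have "\<And>i. P h i \<in> poly_fun" using P h by blast
      then show "(\<lambda>w. f (\<lambda>i. P h i w)) \<in> poly_fun" by (rule pf_subst[OF fpf])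
    qed
    then show ?thesis unfolding F_def[abs_def] .
  qed
  have FX: "F w = (\<Prod>h\<in>carrier G. f (act h w))" if "w \<in> X" for w
    unfolding F_def
  proof (rule prod.cong[OF refl])
    fix h assume "h \<in> carrier G"
    then have "(\<lambda>i. P h i w) = act h w" using P that by (auto intro!: ext)
    then show "f (\<lambda>i. P h i w) = f (act h w)" by simp
  qed
  have inv: "F (act h w) = F w" if h: "h \<in> carrier G" and w: "w \<in> X" for h w
  proof -
    have hw: "act h w \<in> X" using A.element_image[OF h w refl] .
    have "F (act h w) = (\<Prod>g\<in>carrier G. f (act g (act h w)))" using FX[OF hw] .
    also have "\<dots> = (\<Prod>g\<in>carrier G. f (act (g \<otimes>\<^bsub>G\<^esub> h) w))"
      using A.composition_rule[OF w _ h] by simp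
    also have "\<dots> = (\<Prod>g\<in>carrier G. f (act g w))"
      by (rule prod.reindex_bij_witness[where i = "\<lambda>g. g \<otimes>\<^bsub>G\<^esub> inv\<^bsub>G\<^esub> h" and j = "\<lambda>g. g \<otimes>\<^bsub>G\<^esub> h"])
         (use h in \<open>auto simp: m_assoc\<close>)
    also have "\<dots> = F w" using FX[OF w] by simp
    finally show ?thesis .
  qed
  have Finv: "F \<in> invariant_polys G act X"
    unfolding invariant_polys_def using Fpf inv by auto
  have act1: "act \<one>\<^bsub>G\<^esub> w = w" if "w \<in> X" for w
    using A.id_eq_one that by (metis restrict_apply')
  have "f x = 0"
  proof -
    have "(\<Prod>g\<in>carrier G. (1 - u g x)) = 1" unfolding u_def by simp
    then show ?thesis unfolding f_def by simp
  qed
  then have Fx: "F x = 0"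
    using FX[OF x] fin by (metis (no_types, lifting) act1[OF x] one_closed prod_zero_iff)
  have "f (act h y) = 1" if h: "h \<in> carrier G" for h
  proof -
    have "1 - u h (act h y) = 0" unfolding u_def using c h
      by (simp add: field_simps)
    then have "(\<Prod>g\<in>carrier G. (1 - u g (act h y))) = 0"
      using h fin by (metis (no_types, lifting) prod_zero_iff)
    then show ?thesis unfolding f_def by simp
  qed
  then have "F y = 1" using FX[OF y] by simp
  then have "F x \<noteq> F y" using Fx by simp
  then show ?thesis using Finv by blast
qed

theorem lemma2p9:
  fixes G :: "('g, 'c) monoid_scheme"
    and act :: "'g \<Rightarrow> ('n::finite \<Rightarrow> 'k::field_char_0) \<Rightarrow> ('n \<Rightarrow> 'k)"
    and X :: "('n \<Rightarrow> 'k) set"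
    and Z :: "('m::finite \<Rightarrow> 'k) set"
    and \<tau> :: "('r::finite \<Rightarrow> 'k) \<Rightarrow> ('m \<Rightarrow> 'k) \<Rightarrow> ('m \<Rightarrow> 'k)"
    and \<psi>1 \<psi>2 :: "('m \<Rightarrow> 'k) \<Rightarrow> ('n \<Rightarrow> 'k)"
  assumes "alg_closed TYPE('k)"
    and "irreducible_variety X"
    and "group G" and "finite (carrier G)"
    and "group_action G X act"
    and "\<forall>g\<in>carrier G. morphism X X (act g)"
    and "irreducible_variety Z"
    and "torus_action Z \<tau>" and "has_open_orbit Z \<tau>"
    and "morphism Z X \<psi>1" and "morphism Z X \<psi>2"
  shows "(\<forall>z\<in>Z. quot_map G act X (\<psi>1 z) = quot_map G act X (\<psi>2 z))
     \<longleftrightarrow> (\<exists>g\<in>carrier G. \<forall>z\<in>Z. \<psi>2 z = act g (\<psi>1 z))"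
proof
  assume H: "\<forall>z\<in>Z. quot_map G act X (\<psi>1 z) = quot_map G act X (\<psi>2 z)"
  have ex: "\<exists>g\<in>carrier G. \<psi>2 z = act g (\<psi>1 z)" if z: "z \<in> Z" for z
  proof (rule ccontr)
    assume "\<not> ?thesis"
    moreover have "\<psi>1 z \<in> X" "\<psi>2 z \<in> X" using assms(10,11) z unfolding morphism_def by auto
    ultimately obtain F where F: "F \<in> invariant_polys G act X" "F (\<psi>1 z) \<noteq> F (\<psi>2 z)"
      using separate[OF assms(3,4,5,6)] by blast
    have "quot_map G act X (\<psi>1 z) F = quot_map G act X (\<psi>2 z) F" using H z by simp
    then show False using F unfolding quot_map_def by simp
  qed
  obtain Q1 where Q1: "\<forall>i. Q1 i \<in> poly_fun \<and> (\<forall>z\<in>Z. \<psi>1 z i = Q1 i z)"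
    using assms(10) unfolding morphism_def by metis
  obtain Q2 where Q2: "\<forall>i. Q2 i \<in> poly_fun \<and> (\<forall>z\<in>Z. \<psi>2 z i = Q2 i z)"
    using assms(11) unfolding morphism_def by metis
  have "\<forall>g\<in>carrier G. \<forall>i. \<exists>p\<in>poly_fun. \<forall>w\<in>X. act g w i = p w"
    using assms(6) unfolding morphism_def by blast
  then obtain P where P: "\<forall>g\<in>carrier G. \<forall>i. P g i \<in> poly_fun \<and> (\<forall>w\<in>X. act g w i = P g i w)"
    by metis
  define A where "A g = {w. \<forall>h\<in>range (\<lambda>i w. Q2 i w - P g i (\<lambda>j. Q1 j w)). h w = 0}" for g
  have Acl: "\<forall>g\<in>carrier G. zariski_closed (A g)"
  proof
    fix g assume g: "g \<in> carrier G"
    have "range (\<lambda>i w. Q2 i w - P g i (\<lambda>j. Q1 j w)) \<subseteq> poly_fun"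
    proof
      fix h assume "h \<in> range (\<lambda>i w. Q2 i w - P g i (\<lambda>j. Q1 j w))"
      then obtain i where hi: "h = (\<lambda>w. Q2 i w - P g i (\<lambda>j. Q1 j w))" by blast
      have a: "Q2 i \<in> poly_fun" using Q2 by blast
      have b: "P g i \<in> poly_fun" using P g by blast
      have c: "\<And>j. Q1 j \<in> poly_fun" using Q1 by blast
      show "h \<in> poly_fun" unfolding hi by (rule pf_diff[OF a pf_subst[OF b c]])
    qed
    then show "zariski_closed (A g)" unfolding zariski_closed_def A_def by blast
  qed
  have key: "z \<in> A g \<longleftrightarrow> \<psi>2 z = act g (\<psi>1 z)" if z: "z \<in> Z" and g: "g \<in> carrier G" for z g
  proof -
    have x1: "\<psi>1 z \<in> X" using assms(10) z unfolding morphism_def by auto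
    have e1: "(\<lambda>j. Q1 j z) = \<psi>1 z" using Q1 z by auto
    have "z \<in> A g \<longleftrightarrow> (\<forall>i. Q2 i z = P g i (\<psi>1 z))" unfolding A_def e1[symmetric] by auto
    also have "\<dots> \<longleftrightarrow> (\<forall>i. \<psi>2 z i = act g (\<psi>1 z) i)" using Q2 P g x1 z by auto
    also have "\<dots> \<longleftrightarrow> \<psi>2 z = act g (\<psi>1 z)" by (auto intro: ext)
    finally show ?thesis .
  qed
  have "Z \<subseteq> (\<Union>g\<in>carrier G. A g)" using ex key by blast
  then obtain g where g: "g \<in> carrier G" "Z \<subseteq> A g"
    using irred_cover[OF assms(7,4) Acl] by blast
  then show "\<exists>g\<in>carrier G. \<forall>z\<in>Z. \<psi>2 z = act g (\<psi>1 z)" using key by blast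
next
  assume "\<exists>g\<in>carrier G. \<forall>z\<in>Z. \<psi>2 z = act g (\<psi>1 z)"
  then obtain g where g: "g \<in> carrier G" "\<forall>z\<in>Z. \<psi>2 z = act g (\<psi>1 z)" by blast
  show "\<forall>z\<in>Z. quot_map G act X (\<psi>1 z) = quot_map G act X (\<psi>2 z)"
  proof
    fix z assume z: "z \<in> Z"
    have x1: "\<psi>1 z \<in> X" using assms(10) z unfolding morphism_def by auto
    show "quot_map G act X (\<psi>1 z) = quot_map G act X (\<psi>2 z)"
      unfolding quot_map_def invariant_polys_def using g z x1 by auto
  qed
qed

end
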